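(* Let $s\ge 2$ be an integer and let $A\in\mathbb{R}^{s\times s}$ be the strictly lower triangular matrix with $a_{ij}=\frac{1}{s-1}$ for all $1\le j<i\le s$ and $a_{ij}=0$ otherwise (this is the coefficient matrix of the optimal second-order method SSPERK$(s,2)$, whose weights are $b=\frac{1}{s}\mathbf e$). Consider the two weight vectors $$\tilde b_1=\Big[\tfrac{1}{s-1},\ldots,\tfrac{1}{s-1},0\Big],\qquad \tilde b_2=\Big[\tfrac{s+1}{s^2},\tfrac1s,\ldots,\tfrac1s,\tfrac{s-1}{s^2}\Big]$$ (in $\tilde b_1$ the first $s-1$ entries equal $\frac1{s-1}$; in $\tilde b_2$ the entries $2,\dots,s-1$ equal $\frac1s$). Then for $k=1,2$ the explicit Runge--Kutta method $(A,\tilde b_k)$ is of order one (i.e. $\tilde b_k^T\mathbf e=1$), it is non-defective in the sense that $\tilde b_k^Tc\neq\frac12$ where $c=A\mathbf e$, and its SSP coefficient equals $s-1$ (the SSP coefficient of SSPERK$(s,2)$).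
   Context: An explicit $s$-stage Runge--Kutta method with strictly lower triangular coefficient matrix $A$ and weight vector $b$ is denoted $(A,b)$; $\mathbf e=(1,\dots,1)^T$ and $c=A\mathbf e$. SSP coefficient: with $K=\begin{pmatrix}A&0\\ b^T&0\end{pmatrix}\in\mathbb{R}^{(s+1)\times(s+1)}$, the SSP coefficient of $(A,b)$ is $\mathcal C(A,b)=\sup\{r\ge 0:\ (I+rK)^{-1}\text{ exists},\ K(I+rK)^{-1}\ge 0,\ rK(I+rK)^{-1}\mathbf e\le \mathbf e\}$, inequalities taken componentwise. *)

theory Defs
  imports "Jordan_Normal_Form.Matrix"
begin

definition ones_vec :: "nat \<Rightarrow> real vec" where
  "ones_vec n = vec n (\<lambda>_. 1)"

definition rk_K :: "real mat \<Rightarrow> real vec \<Rightarrow> real mat" where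
  "rk_K A b = (let s = dim_vec b in
     mat (s+1) (s+1) (\<lambda>(i,j). if i < s \<and> j < s then A $$ (i,j)
                              else if i = s \<and> j < s then b $ j else 0))"

definition ssp_coefficient :: "real mat \<Rightarrow> real vec \<Rightarrow> real" where
  "ssp_coefficient A b = (let s = dim_vec b; K = rk_K A b in
     Sup {r. r \<ge> 0 \<and>
       (\<exists>M \<in> carrier_mat (s+1) (s+1).
          inverts_mat (1\<^sub>m (s+1) + r \<cdot>\<^sub>m K) M \<and> inverts_mat M (1\<^sub>m (s+1) + r \<cdot>\<^sub>m K) \<and>
          (\<forall>i<s+1. \<forall>j<s+1. (K * M) $$ (i,j) \<ge> 0) \<and>
          (\<forall>i<s+1. ((r \<cdot>\<^sub>m K * M) *\<^sub>v ones_vec (s+1)) $ i \<le> 1))})"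

definition sspA :: "nat \<Rightarrow> real mat" where
  "sspA s = mat s s (\<lambda>(i,j). if j < i then 1 / (real s - 1) else 0)"

definition btilde1 :: "nat \<Rightarrow> real vec" where
  "btilde1 s = vec s (\<lambda>j. if j < s - 1 then 1 / (real s - 1) else 0)"

definition btilde2 :: "nat \<Rightarrow> real vec" where
  "btilde2 s = vec s (\<lambda>j. if j = 0 then (real s + 1) / (real s)^2
                          else if j = s - 1 then (real s - 1) / (real s)^2
                          else 1 / real s)"

end

theory Submission
  imports Defs "Jordan_Normal_Form.Determinant"
begin


lemma mult_entry:
  assumes "A \<in> carrier_mat n n" "B \<in> carrier_mat n n" "i<n" "j<n"
  shows "(A*B)$$(i,j) = (\<Sum>k<n. A$$(i,k)*B$$(k,j))"
  using assms by (auto simp: scalar_prod_def lessThan_atLeast0 intro!: sum.cong)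

lemma mv_entry:
  assumes "A \<in> carrier_mat n n" "i<n" "dim_vec v = n"
  shows "(A *\<^sub>v v)$i = (\<Sum>k<n. A$$(i,k)*v$k)"
  using assms by (auto simp: scalar_prod_def lessThan_atLeast0 intro!: sum.cong)

lemma K_carrier: "dim_vec b = s \<Longrightarrow> rk_K A b \<in> carrier_mat (s+1) (s+1)"
  by (simp add: rk_K_def)

lemma K_entry: "dim_vec b = s \<Longrightarrow> i < s+1 \<Longrightarrow> j < s+1 \<Longrightarrow>
  rk_K (sspA s) b $$ (i,j) = (if i<s \<and> j<s then (if j<i then 1/(real s - 1) else 0)
      else if i = s \<and> j<s then b$j else 0)"
  by (simp add: rk_K_def sspA_def)

lemma dotp: "dim_vec b = n \<Longrightarrow> dim_vec v = n \<Longrightarrow> b \<bullet> v = (\<Sum>k<n. b$k * v$k)"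
  by (simp add: scalar_prod_def lessThan_atLeast0)

lemma gauss: "(\<Sum>j<n. real j) = real n * (real n - 1) / 2"
  by (induction n) (auto simp: field_simps)




lemma X_entry: "K \<in> carrier_mat n n \<Longrightarrow> i < n \<Longrightarrow> j < n \<Longrightarrow>
  (1\<^sub>m n + r \<cdot>\<^sub>m K) $$ (i,j) = (if i = j then 1 else 0) + r * K $$ (i,j)"
  by simp

lemma S_entry: "K \<in> carrier_mat n n \<Longrightarrow> i < n \<Longrightarrow> j < n \<Longrightarrow>
  (r \<cdot>\<^sub>m K) $$ (i,j) = r * K $$ (i,j)"
  by simp

lemma upper:
  fixes b :: "real vec" and s :: nat
  defines "K \<equiv> rk_K (sspA s) b"
  assumes db: "dim_vec b = s" and s2: "s \<ge> 2" and Mc: "M \<in> carrier_mat (s+1) (s+1)"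
    and inv: "inverts_mat (1\<^sub>m (s+1) + r \<cdot>\<^sub>m K) M"
    and le: "\<forall>i<s+1. ((r \<cdot>\<^sub>m K * M) *\<^sub>v ones_vec (s+1)) $ i \<le> 1"
  shows "r \<le> real s - 1"
proof -
  have Kc: "K \<in> carrier_mat (s+1) (s+1)" using K_carrier[OF db] K_def by simp
  have Ke: "K $$ (i,j) = (if i<s \<and> j<s then (if j<i then 1/(real s - 1) else 0)
      else if i = s \<and> j<s then b$j else 0)" if "i < s+1" "j < s+1" for i j
    using K_entry[OF db that] K_def by simp
  have Xe: "(1\<^sub>m (Suc s) + r \<cdot>\<^sub>m K) $$ (i,j) = (if i = j then 1 else 0) + r * K $$ (i,j)"
    if "i < s+1" "j < s+1" for i j using X_entry[OF Kc that] by simp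
  have Se: "(r \<cdot>\<^sub>m K) $$ (i,j) = r * K $$ (i,j)"
    if "i < s+1" "j < s+1" for i j using S_entry[OF Kc that] by simp
  have Xc: "1\<^sub>m (s+1) + r \<cdot>\<^sub>m K \<in> carrier_mat (s+1) (s+1)" using Kc by simp
  have XM: "(1\<^sub>m (s+1) + r \<cdot>\<^sub>m K) * M = 1\<^sub>m (s+1)" using inv Xc Kc unfolding inverts_mat_def by simp
  have M0: "M $$ (0,j) = (if j = 0 then 1 else 0)" if j: "j < s+1" for j
  proof -
    have "(\<Sum>k<s+1. (1\<^sub>m (s+1) + r \<cdot>\<^sub>m K) $$ (0,k) * M $$ (k,j)) = 1\<^sub>m (s+1) $$ (0,j)"
      using mult_entry[OF Xc Mc, of 0 j] j XM by simp
    moreover have "(\<Sum>k<s+1. (1\<^sub>m (s+1) + r \<cdot>\<^sub>m K) $$ (0,k) * M $$ (k,j)) =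
        (\<Sum>k<s+1. (if k = 0 then M $$ (0,j) else 0))"
      using s2 by (intro sum.cong) (auto simp: Xe Ke)
    ultimately show ?thesis using j by simp
  qed
  have RMc: "r \<cdot>\<^sub>m K * M \<in> carrier_mat (s+1) (s+1)" using Kc Mc by (metis mult_carrier_mat smult_carrier_mat)
  have R1: "(r \<cdot>\<^sub>m K * M) $$ (1,j) = (if j = 0 then r / (real s - 1) else 0)" if j: "j < s+1" for j
  proof -
    have "(r \<cdot>\<^sub>m K * M) $$ (1,j) = (\<Sum>k<s+1. (r \<cdot>\<^sub>m K) $$ (1,k) * M $$ (k,j))"
      using mult_entry[of "r \<cdot>\<^sub>m K" "s+1" M 1 j] Kc Mc j s2 by simp
    also have "\<dots> = (\<Sum>k<s+1. (if k = 0 then r / (real s - 1) * M $$ (0,j) else 0))"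
      using s2 by (intro sum.cong) (auto simp: Se Ke)
    finally show ?thesis using M0[OF j] M0[of 0] s2 by simp
  qed
  have "((r \<cdot>\<^sub>m K * M) *\<^sub>v ones_vec (s+1)) $ 1 = (\<Sum>j<s+1. (r \<cdot>\<^sub>m K * M) $$ (1,j) * ones_vec (s+1) $ j)"
    using mv_entry[OF RMc, of 1 "ones_vec (s+1)"] s2 by (simp add: ones_vec_def)
  also have "\<dots> = (\<Sum>j<s+1. (if j = 0 then r / (real s - 1) else 0))"
    by (intro sum.cong) (auto simp: R1 R1[simplified] ones_vec_def)
  finally have e1: "((r \<cdot>\<^sub>m K * M) *\<^sub>v ones_vec (s+1)) $ 1 = r / (real s - 1)" by simp
  have "r / (real s - 1) \<le> 1" using le[rule_format, of 1] s2 unfolding e1 by simp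
  then show ?thesis using s2 by (simp add: divide_le_eq split: if_splits)
qed




lemma member:
  fixes b :: "real vec" and s :: nat
  defines "K \<equiv> rk_K (sspA s) b" and "r \<equiv> real s - 1"
  assumes db: "dim_vec b = s" and s2: "s \<ge> 2"
    and mono: "\<And>j. Suc j < s \<Longrightarrow> b$(Suc j) \<le> b$j"
    and nonneg: "b$(s-1) \<ge> 0" and top: "r * b$0 \<le> 1"
  shows "\<exists>M \<in> carrier_mat (s+1) (s+1).
          inverts_mat (1\<^sub>m (s+1) + r \<cdot>\<^sub>m K) M \<and> inverts_mat M (1\<^sub>m (s+1) + r \<cdot>\<^sub>m K) \<and>
          (\<forall>i<s+1. \<forall>j<s+1. (K * M) $$ (i,j) \<ge> 0) \<and>
          (\<forall>i<s+1. ((r \<cdot>\<^sub>m K * M) *\<^sub>v ones_vec (s+1)) $ i \<le> 1)"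
proof -
  define a where "a = 1 / r"
  have rpos: "r > 0" using s2 r_def by simp
  have ra: "r * a = 1" "a * r = 1" using rpos a_def by simp_all
  have apos: "a > 0" using rpos a_def by simp
  define e where "e j = b$j - (if Suc j < s then b$(Suc j) else 0)" for j
  have enn: "e j \<ge> 0" if "j < s" for j
  proof (cases "Suc j < s")
    case True then show ?thesis using mono[OF True] e_def by simp
  next
    case False then have "j = s - 1" using that by simp
    then show ?thesis using False nonneg e_def by simp
  qed
  define M :: "real mat" where "M = mat (s+1) (s+1) (\<lambda>(i,j). (if i=j then 1 else 0)
     - (if i = Suc j \<and> i < s then 1 else 0) - (if i = s \<and> j < s then r * e j else 0))"
  have Mc: "M \<in> carrier_mat (s+1) (s+1)" by (simp add: M_def)
  have Me: "M $$ (i,j) = (if i=j then 1 else 0)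
     - (if i = Suc j \<and> i < s then 1 else 0) - (if i = s \<and> j < s then r * e j else 0)"
    if "i < s+1" "j < s+1" for i j using that by (simp add: M_def)
  have Kc: "K \<in> carrier_mat (s+1) (s+1)" using K_carrier[OF db] K_def by simp
  have Ke: "K $$ (i,j) = (if i<s \<and> j<s then (if j<i then a else 0)
      else if i = s \<and> j<s then b$j else 0)" if "i < s+1" "j < s+1" for i j
    using K_entry[OF db that] K_def a_def r_def by simp
  have dK: "dim_row K = s+1" "dim_col K = s+1" using Kc by auto
  have dM: "dim_row M = s+1" "dim_col M = s+1" using Mc by auto
  have KMc: "K * M \<in> carrier_mat (s+1) (s+1)" using Kc Mc by (metis mult_carrier_mat)
  have KM: "(K * M) $$ (i,j) = (if i = Suc j \<and> i < s then a else 0) + (if i = s \<and> j < s then e j else 0)"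
    if ij: "i < s+1" "j < s+1" for i j
  proof (cases "i < s")
    case True
    have "(K * M) $$ (i,j) = (\<Sum>k<s+1. K $$ (i,k) * M $$ (k,j))"
      using mult_entry[OF Kc Mc ij] .
    also have "\<dots> = (\<Sum>k<s+1. (if k = j then (if j < i then a else 0) else 0)
                  - (if k = Suc j then (if Suc j < i then a else 0) else 0))"
      using True ij by (intro sum.cong) (auto simp: Ke Me)
    also have "\<dots> = (if j < i then a else 0) - (if Suc j < i then a else 0)"
      using ij True by (simp add: sum_subtractf)
    finally show ?thesis using True by auto
  next
    case False
    then have iS: "i = s" using ij by simp
    have "(K * M) $$ (i,j) = (\<Sum>k<s+1. K $$ (i,k) * M $$ (k,j))"
      using mult_entry[OF Kc Mc ij] .
    also have "\<dots> = (\<Sum>k<s+1. (if k = j then (if j < s then b$j else 0) else 0)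
                  - (if k = Suc j then (if Suc j < s then b$(Suc j) else 0) else 0))"
      using iS ij by (intro sum.cong) (auto simp: Ke Me)
    also have "\<dots> = (if j < s then b$j else 0) - (if Suc j < s then b$(Suc j) else 0)"
      using ij by (simp add: sum_subtractf)
    finally show ?thesis using iS e_def by auto
  qed
  have Xc: "1\<^sub>m (s+1) + r \<cdot>\<^sub>m K \<in> carrier_mat (s+1) (s+1)" using Kc by simp
  have XM: "(1\<^sub>m (s+1) + r \<cdot>\<^sub>m K) * M = 1\<^sub>m (s+1)"
  proof -
    have "(1\<^sub>m (s+1) + r \<cdot>\<^sub>m K) * M = 1\<^sub>m (s+1) * M + (r \<cdot>\<^sub>m K) * M"
      using Kc Mc by (intro add_mult_distrib_mat) auto
    also have "\<dots> = M + r \<cdot>\<^sub>m (K * M)"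
      using Kc Mc by (simp add: mult_smult_assoc_mat)
    also have "\<dots> = 1\<^sub>m (s+1)"
    proof (rule eq_matI)
      fix i j assume ij: "i < dim_row (1\<^sub>m (s+1) :: real mat)" "j < dim_col (1\<^sub>m (s+1) :: real mat)"
      then have ij': "i < s+1" "j < s+1" by auto
      have "(M + r \<cdot>\<^sub>m (K * M)) $$ (i,j) = M $$ (i,j) + r * (K*M) $$ (i,j)"
        using ij' Mc KMc Kc by (simp add: index_add_mat carrier_matD)
      also have "\<dots> = (if i = j then 1 else 0)"
        using ij' by (auto simp: Me KM ra algebra_simps)
      finally show "(M + r \<cdot>\<^sub>m (K * M)) $$ (i,j) = 1\<^sub>m (s+1) $$ (i,j)" using ij' by simp
    qed (use Mc Kc in auto)
    finally show ?thesis .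
  qed
  have MX: "M * (1\<^sub>m (s+1) + r \<cdot>\<^sub>m K) = 1\<^sub>m (s+1)"
    using mat_mult_left_right_inverse[OF Xc Mc XM] .
  have nonnegKM: "\<forall>i<s+1. \<forall>j<s+1. (K * M) $$ (i,j) \<ge> 0"
    using apos enn by (auto simp: KM)
  have rows: "((r \<cdot>\<^sub>m K * M) *\<^sub>v ones_vec (s+1)) $ i \<le> 1" if i: "i < s+1" for i
  proof -
    have RMc: "r \<cdot>\<^sub>m K * M \<in> carrier_mat (s+1) (s+1)" using Kc Mc by (metis mult_carrier_mat smult_carrier_mat)
    have eq: "r \<cdot>\<^sub>m K * M = r \<cdot>\<^sub>m (K * M)" using Kc Mc by (simp add: mult_smult_assoc_mat)
    have "((r \<cdot>\<^sub>m K * M) *\<^sub>v ones_vec (s+1)) $ i = (\<Sum>j<s+1. (r \<cdot>\<^sub>m K * M) $$ (i,j) * ones_vec (s+1) $ j)"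
      using mv_entry[OF RMc i, of "ones_vec (s+1)"] by (simp add: ones_vec_def)
    also have "\<dots> = (\<Sum>j<s+1. r * (K * M) $$ (i,j))"
      using KMc i by (intro sum.cong) (auto simp: eq ones_vec_def dK dM)
    finally have S: "((r \<cdot>\<^sub>m K * M) *\<^sub>v ones_vec (s+1)) $ i = (\<Sum>j<s+1. r * (K * M) $$ (i,j))" .
    show ?thesis
    proof (cases "i < s")
      case True
      have "(\<Sum>j<s+1. r * (K * M) $$ (i,j)) = (\<Sum>j<s+1. if j = i - 1 then (if 0 < i then 1 else 0) else (0::real))"
        using True ra by (intro sum.cong) (auto simp: KM)
      also have "\<dots> \<le> 1" using True by simp
      finally show ?thesis using S by simp
    next
      case False
      then have iS: "i = s" using i by simp
      define f where "f j = (if j < s then b$j else 0)" for j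
      have "(\<Sum>j<s+1. r * (K * M) $$ (i,j)) = (\<Sum>j<s+1. if j < s then r * e j else 0)"
        using iS by (intro sum.cong) (auto simp: KM)
      also have "\<dots> = r * (\<Sum>j<s. e j)" by (simp add: sum_distrib_left)
      also have "(\<Sum>j<s. e j) = (\<Sum>j<s. f j - f (Suc j))"
        by (intro sum.cong) (auto simp: e_def f_def)
      also have "\<dots> = f 0 - f s" by (rule sum_lessThan_telescope')
      also have "\<dots> = b$0" using s2 by (simp add: f_def)
      finally show ?thesis using S top by simp
    qed
  qed
  show ?thesis
    using Mc XM MX nonnegKM rows Xc unfolding inverts_mat_def
    by (intro bexI[of _ M]) (auto simp: Mc)
qed




lemma sum_lt_const: "(\<Sum>j<n. if j < i then x else 0) = real (min i n) * (x::real)"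
  apply (induction n)
   apply (auto simp: min_def algebra_simps)
  apply (subgoal_tac "i = Suc n")
   apply (auto simp: algebra_simps)
  done

lemma gauss1: "(\<Sum>i<m. 1 + real i) = real m * (real m + 1) / 2"
  by (induction m) (auto simp: field_simps)

lemma L1: "(x::real) \<ge> 0 \<Longrightarrow> (x+1)/(x+2)^2 \<le> (x+3)/(x+2)^2"
  by (rule divide_right_mono) auto

lemma L0: "(x::real) \<ge> 0 \<Longrightarrow> 1/(x+2) = (x+2)/(x+2)^2"
  by (simp add: power2_eq_square)

lemma L2: "(x::real) \<ge> 0 \<Longrightarrow> 1/(x+2) \<le> (x+3)/(x+2)^2"
  unfolding L0 by (rule divide_right_mono) auto

lemma L3: "(x::real) \<ge> 0 \<Longrightarrow> (x+1)/(x+2)^2 \<le> 1/(x+2)"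
  unfolding L0 by (rule divide_right_mono) auto

lemma L4: "(x::real) \<ge> 0 \<Longrightarrow> (x+1) * ((x+3)/(x+2)^2) \<le> 1"
proof -
  assume x: "x \<ge> 0"
  have p: "(x+2)^2 > 0" using x by simp
  have "(x+1)*(x+3) \<le> (x+2)^2" by (simp add: power2_eq_square algebra_simps)
  then show ?thesis using p by (simp add: pos_divide_le_eq)
qed

lemma split3: "(\<Sum>k<Suc (Suc m). f k) = f 0 + (\<Sum>k<m. f (Suc k)) + (f (Suc m) :: real)"
  by (simp only: sum.lessThan_Suc[of f "Suc m"] sum.lessThan_Suc_shift[of f m])

lemma gauss_suc: "(\<Sum>i<m. real (Suc i)) = real m * (real m + 1) / 2"
  by (induction m) (auto simp: field_simps)

lemma c_entry: "i < s \<Longrightarrow> (sspA s *\<^sub>v ones_vec s) $ i = real i / (real s - 1)"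
proof -
  assume i: "i < s"
  have "(sspA s *\<^sub>v ones_vec s) $ i = (\<Sum>j<s. sspA s $$ (i,j) * ones_vec s $ j)"
    using mv_entry[of "sspA s" s i "ones_vec s"] i by (simp add: sspA_def ones_vec_def)
  also have "\<dots> = (\<Sum>j<s. if j < i then 1 / (real s - 1) else 0)"
    using i by (intro sum.cong) (auto simp: sspA_def ones_vec_def)
  also have "\<dots> = real i / (real s - 1)" using i by (simp add: sum_lt_const)
  finally show ?thesis .
qed

lemma dim_c: "dim_vec (sspA s *\<^sub>v ones_vec s) = s" by (simp add: sspA_def)

lemma ssp_eq:
  fixes b :: "real vec" and s :: nat
  assumes db: "dim_vec b = s" and s2: "s \<ge> 2"
    and mono: "\<And>j. Suc j < s \<Longrightarrow> b$(Suc j) \<le> b$j"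
    and nonneg: "b$(s-1) \<ge> 0" and top: "(real s - 1) * b$0 \<le> 1"
  shows "ssp_coefficient (sspA s) b = real s - 1"
proof -
  let ?S = "{r. r \<ge> 0 \<and>
       (\<exists>M \<in> carrier_mat (s+1) (s+1).
          inverts_mat (1\<^sub>m (s+1) + r \<cdot>\<^sub>m rk_K (sspA s) b) M \<and> inverts_mat M (1\<^sub>m (s+1) + r \<cdot>\<^sub>m rk_K (sspA s) b) \<and>
          (\<forall>i<s+1. \<forall>j<s+1. (rk_K (sspA s) b * M) $$ (i,j) \<ge> 0) \<and>
          (\<forall>i<s+1. ((r \<cdot>\<^sub>m rk_K (sspA s) b * M) *\<^sub>v ones_vec (s+1)) $ i \<le> 1))}"
  have "ssp_coefficient (sspA s) b = Sup ?S" by (simp add: ssp_coefficient_def db Let_def)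
  also have "\<dots> = real s - 1"
  proof (rule cSup_eq_maximum)
    show "real s - 1 \<in> ?S" using member[OF db s2 mono nonneg top] s2 by auto
    show "\<And>x. x \<in> ?S \<Longrightarrow> x \<le> real s - 1" using upper[OF db s2] by blast
  qed
  finally show ?thesis .
qed

lemma b1_facts:
  fixes m :: nat
  defines "s \<equiv> m + 2"
  shows "btilde1 s \<bullet> ones_vec s = 1 \<and>
           btilde1 s \<bullet> (sspA s *\<^sub>v ones_vec s) \<noteq> 1/2 \<and>
           ssp_coefficient (sspA s) (btilde1 s) = real s - 1"
proof -
  have assms: "s \<ge> 2" using s_def by simp
  have db: "dim_vec (btilde1 s) = s" by (simp add: btilde1_def)
  have o: "ones_vec s $ k = 1" if "k < m+2" for k using that s_def by (simp add: ones_vec_def)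
  have c: "(sspA s *\<^sub>v ones_vec s) $ k = real k / (real m + 1)" if "k < m+2" for k
    using c_entry[of k s] that s_def by simp
  have e: "btilde1 s $ k = (if k < m+1 then 1 / (real m + 1) else 0)" if "k < m+2" for k
    using that by (simp add: s_def btilde1_def)
  have "btilde1 s \<bullet> ones_vec s = (\<Sum>k<m+2. btilde1 s $ k * ones_vec s $ k)"
    using dotp[OF db] s_def by (simp add: ones_vec_def)
  also have "\<dots> = (\<Sum>k<m+2. if k < m+1 then 1 / (real m + 1) else 0)"
    by (intro sum.cong) (auto simp: e o)
  also have "\<dots> = 1" by (simp add: sum_lt_const)
  finally have h1: "btilde1 s \<bullet> ones_vec s = 1" .
  have "btilde1 s \<bullet> (sspA s *\<^sub>v ones_vec s) = (\<Sum>k<m+2. btilde1 s $ k * (sspA s *\<^sub>v ones_vec s) $ k)"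
    using dotp[OF db dim_c] s_def by simp
  also have "\<dots> = (\<Sum>k<m+2. if k < m+1 then real k / (real m + 1)^2 else 0)"
    by (intro sum.cong) (auto simp: e c power2_eq_square)
  also have "\<dots> = (\<Sum>k<m+1. real k / (real m + 1)^2)" by simp
  also have "\<dots> = (\<Sum>k<m+1. real k) / (real m + 1)^2" by (rule sum_divide_distrib[symmetric])
  also have "\<dots> = real m / (2 * (real m + 1))"
    apply (simp add: gauss)
    apply (simp add: divide_simps)
    apply (simp add: algebra_simps power2_eq_square)
    done
  finally have v: "btilde1 s \<bullet> (sspA s *\<^sub>v ones_vec s) = real m / (2 * (real m + 1))" .
  have h2: "btilde1 s \<bullet> (sspA s *\<^sub>v ones_vec s) \<noteq> 1/2" unfolding v by (simp add: divide_simps)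
  have h3: "ssp_coefficient (sspA s) (btilde1 s) = real s - 1"
    by (rule ssp_eq[OF db assms]) (auto simp: btilde1_def s_def)
  show ?thesis using h1 h2 h3 by simp
qed

lemma b2_facts:
  fixes m :: nat
  defines "s \<equiv> m + 2"
  shows "btilde2 s \<bullet> ones_vec s = 1 \<and>
           btilde2 s \<bullet> (sspA s *\<^sub>v ones_vec s) \<noteq> 1/2 \<and>
           ssp_coefficient (sspA s) (btilde2 s) = real s - 1"
proof -
  have assms: "s \<ge> 2" using s_def by simp
  have db: "dim_vec (btilde2 s) = s" by (simp add: btilde2_def)
  have o: "ones_vec s $ k = 1" if "k < m+2" for k using that s_def by (simp add: ones_vec_def)
  have c: "(sspA s *\<^sub>v ones_vec s) $ k = real k / (real m + 1)" if "k < m+2" for k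
    using c_entry[of k s] that s_def by simp
  have e: "btilde2 s $ k = (if k = 0 then (real m + 3) / (real m + 2)^2
     else if k = m+1 then (real m + 1) / (real m + 2)^2 else 1 / (real m + 2))" if "k < m+2" for k
    using that by (simp add: s_def btilde2_def algebra_simps)
  have "btilde2 s \<bullet> ones_vec s = (\<Sum>k<m+2. btilde2 s $ k * ones_vec s $ k)"
    using dotp[OF db] s_def by (simp add: ones_vec_def)
  also have "\<dots> = (\<Sum>k<Suc (Suc m). btilde2 s $ k)"
    by (intro sum.cong) (auto simp: o)
  also have "\<dots> = btilde2 s $ 0 + (\<Sum>k<m. btilde2 s $ (Suc k)) + btilde2 s $ (Suc m)"
    by (rule split3)
  also have "(\<Sum>k<m. btilde2 s $ (Suc k)) = (\<Sum>k<m. 1 / (real m + 2))"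
    by (intro sum.cong) (auto simp: e)
  also have "btilde2 s $ 0 + (\<Sum>k<m. 1 / (real m + 2)) + btilde2 s $ (Suc m) = 1"
    apply (simp add: e)
    apply (simp add: divide_simps)
    apply (simp add: algebra_simps power2_eq_square)
    done
  finally have h1: "btilde2 s \<bullet> ones_vec s = 1" .
  have "btilde2 s \<bullet> (sspA s *\<^sub>v ones_vec s) = (\<Sum>k<Suc (Suc m). btilde2 s $ k * (sspA s *\<^sub>v ones_vec s) $ k)"
    using dotp[OF db dim_c] s_def by simp
  also have "\<dots> = btilde2 s $ 0 * (sspA s *\<^sub>v ones_vec s) $ 0
       + (\<Sum>k<m. btilde2 s $ (Suc k) * (sspA s *\<^sub>v ones_vec s) $ (Suc k))
       + btilde2 s $ (Suc m) * (sspA s *\<^sub>v ones_vec s) $ (Suc m)"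
    by (rule split3)
  also have "(\<Sum>k<m. btilde2 s $ (Suc k) * (sspA s *\<^sub>v ones_vec s) $ (Suc k))
      = (\<Sum>k<m. real (Suc k)) / ((real m + 2) * (real m + 1))"
    unfolding sum_divide_distrib by (intro sum.cong) (auto simp: e c)
  also have "btilde2 s $ 0 * (sspA s *\<^sub>v ones_vec s) $ 0
       + (\<Sum>k<m. real (Suc k)) / ((real m + 2) * (real m + 1))
       + btilde2 s $ (Suc m) * (sspA s *\<^sub>v ones_vec s) $ (Suc m)
     = (real m ^ 2 + 4 * real m + 2) / (2 * (real m + 2)^2)"
    apply (simp add: e c gauss1)
    apply (simp add: divide_simps)
    apply (simp add: algebra_simps power2_eq_square)
    done
  finally have v: "btilde2 s \<bullet> (sspA s *\<^sub>v ones_vec s) = (real m ^ 2 + 4 * real m + 2) / (2 * (real m + 2)^2)" .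
  have h2: "btilde2 s \<bullet> (sspA s *\<^sub>v ones_vec s) \<noteq> 1/2" unfolding v
    by (simp add: divide_simps power2_eq_square algebra_simps)
  have h3: "ssp_coefficient (sspA s) (btilde2 s) = real s - 1"
  proof (rule ssp_eq[OF db assms])
    show "btilde2 s $ Suc j \<le> btilde2 s $ j" if "Suc j < s" for j
    proof -
      have j: "Suc j < m+2" using that s_def by simp
      show ?thesis
      proof (cases "j = 0")
        case True
        then show ?thesis using j L1[of "real m"] L2[of "real m"] by (simp add: e)
      next
        case False
        then show ?thesis using j L3[of "real m"] by (simp add: e)
      qed
    qed
    have "s - 1 = m + 1" using s_def by simp
    then show "btilde2 s $ (s-1) \<ge> 0" by (simp add: e)
    have "real s - 1 = real m + 1" using s_def by simp
    then show "(real s - 1) * btilde2 s $ 0 \<le> 1"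
      using L4[of "real m"] by (simp add: e add.commute)
  qed
  show ?thesis using h1 h2 h3 by simp
qed

theorem mainTheorem1:
  fixes s :: nat
  assumes "s \<ge> 2"
  shows "\<forall>b \<in> {btilde1 s, btilde2 s}.
           b \<bullet> ones_vec s = 1 \<and>
           b \<bullet> (sspA s *\<^sub>v ones_vec s) \<noteq> 1/2 \<and>
           ssp_coefficient (sspA s) b = real s - 1"
proof -
  obtain m where s: "s = m + 2" using assms by (metis add.commute le_Suc_ex)
  show ?thesis using b1_facts[of m] b2_facts[of m] s by simp
qed


end
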